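(* Let $n, d, d_k, d_v \ge 1$, let $W_Q, W_K \in \mathbb{R}^{d\times d_k}$, $W_V \in \mathbb{R}^{d \times d_v}$ be fixed (deterministic) matrices, and for $x \in \mathbb{R}^{n\times d}$ let $$\mathrm{Attn}(x) = \mathrm{softmax}\!\left(\frac{(xW_Q)(xW_K)^\top}{\sqrt{d_k}}\right) x W_V,$$ with softmax applied row-wise. Let $h^{(0)} \in \mathbb{R}^{n\times d}$ be a random matrix whose rows $h^{(0)}_1,\dots,h^{(0)}_n$ are independent with $h^{(0)}_i \sim N(0,\sigma^2 I_d)$ for some $\sigma>0$. Then $\mathbb{E}[\mathrm{Attn}(h^{(0)})] = 0$.
   Context: Row-wise softmax: for $S\in\mathbb{R}^{n\times n}$, $\mathrm{softmax}(S)_{ij} = e^{S_{ij}}/\sum_{k} e^{S_{ik}}$. The expectation is entrywise. *)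

theory Defs
  imports "HOL-Probability.Probability"
begin

text \<open>Matrices are represented as functions nat => nat => real, with explicit
dimension bounds. An (r x c) matrix A is meaningful on indices i < r, j < c.\<close>

definition matmul :: "nat \<Rightarrow> (nat \<Rightarrow> nat \<Rightarrow> real) \<Rightarrow> (nat \<Rightarrow> nat \<Rightarrow> real) \<Rightarrow> nat \<Rightarrow> nat \<Rightarrow> real" where
  "matmul m A B = (\<lambda>i k. \<Sum>j<m. A i j * B j k)"

definition mtranspose :: "(nat \<Rightarrow> nat \<Rightarrow> real) \<Rightarrow> nat \<Rightarrow> nat \<Rightarrow> real" where
  "mtranspose A = (\<lambda>i j. A j i)"

definition softmax :: "nat \<Rightarrow> (nat \<Rightarrow> nat \<Rightarrow> real) \<Rightarrow> nat \<Rightarrow> nat \<Rightarrow> real" where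
  "softmax n S = (\<lambda>i j. exp (S i j) / (\<Sum>k<n. exp (S i k)))"

definition attn :: "nat \<Rightarrow> nat \<Rightarrow> nat \<Rightarrow> (nat \<Rightarrow> nat \<Rightarrow> real) \<Rightarrow> (nat \<Rightarrow> nat \<Rightarrow> real)
    \<Rightarrow> (nat \<Rightarrow> nat \<Rightarrow> real) \<Rightarrow> (nat \<Rightarrow> nat \<Rightarrow> real) \<Rightarrow> nat \<Rightarrow> nat \<Rightarrow> real" where
  "attn n d dk WQ WK WV x =
     matmul n
       (softmax n (\<lambda>i k. matmul dk (matmul d x WQ) (mtranspose (matmul d x WK)) i k / sqrt (real dk)))
       (matmul d x WV)"

definition gaussian_vec :: "nat \<Rightarrow> real \<Rightarrow> (nat \<Rightarrow> real) measure" where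
  "gaussian_vec d \<sigma> = PiM {..<d} (\<lambda>_. density lborel (normal_density 0 \<sigma>))"

end

theory Submission
  imports Defs
begin

lemma attn_restrict:
  assumes "i < n"
  shows "attn n d dk WQ WK WV x i l = attn n d dk WQ WK WV (\<lambda>k\<in>{..<n}. \<lambda>j\<in>{..<d}. x k j) i l"
  unfolding attn_def matmul_def softmax_def mtranspose_def
  by (intro sum.cong refl arg_cong2[where f="(*)"] arg_cong2[where f="(/)"] arg_cong[where f=exp]) (use assms in auto)

lemma attn_neg:
  "attn n d dk WQ WK WV (\<lambda>k j. - x k j) i l = - attn n d dk WQ WK WV x i l"
  unfolding attn_def matmul_def softmax_def mtranspose_def
  by (simp add: sum_negf sum_distrib_left)

lemma coord_meas:
  assumes "k \<in> I" "j \<in> J"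
  shows "(\<lambda>y. y k j) \<in> borel_measurable (PiM I (\<lambda>_. PiM J (\<lambda>_. (borel :: real measure))))"
  by (rule measurable_compose[OF measurable_component_singleton[OF assms(1)] measurable_component_singleton[OF assms(2)]])

lemma attn_meas:
  assumes i: "i < n"
  shows "(\<lambda>y. attn n d dk WQ WK WV y i l) \<in> borel_measurable (PiM {..<n} (\<lambda>_. PiM {..<d} (\<lambda>_. (borel :: real measure))))"
proof -
  let ?P = "PiM {..<n} (\<lambda>_. PiM {..<d} (\<lambda>_. (borel :: real measure)))"
  have c: "(\<lambda>y. y k j) \<in> borel_measurable ?P" if "k < n" "j < d" for k j
    using coord_meas[of k "{..<n}" j "{..<d}"] that by simp
  have xw: "(\<lambda>y. \<Sum>j<d. y k j * W j m) \<in> borel_measurable ?P" if "k < n" for k m :: nat and W :: "nat \<Rightarrow> nat \<Rightarrow> real"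
    by (rule borel_measurable_sum, rule borel_measurable_times[OF c[OF that] measurable_const]) auto
  have s: "(\<lambda>y. (\<Sum>m<dk. (\<Sum>j<d. y i j * WQ j m) * (\<Sum>j<d. y k j * WK j m)) / sqrt (real dk))
       \<in> borel_measurable ?P" if "i < n" "k < n" for i k
    by (rule borel_measurable_divide[OF borel_measurable_sum measurable_const],
        rule borel_measurable_times[OF xw[OF that(1)] xw[OF that(2)]], simp)
  have e: "(\<lambda>y. exp ((\<Sum>m<dk. (\<Sum>j<d. y i j * WQ j m) * (\<Sum>j<d. y k j * WK j m)) / sqrt (real dk)))
       \<in> borel_measurable ?P" if "i < n" "k < n" for i k
    by (rule measurable_compose[OF s[OF that] borel_measurable_exp])
  show ?thesis
    unfolding attn_def matmul_def softmax_def mtranspose_def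
    apply (rule borel_measurable_sum)
    apply (rule borel_measurable_times)
     apply (rule borel_measurable_divide)
      apply (rule e; simp add: i)
     apply (rule borel_measurable_sum)
     apply (rule e; simp add: i)
    apply (rule xw; simp)
    done
qed

lemma normal_sym:
  "distr (density lborel (normal_density 0 \<sigma>)) borel uminus = density lborel (normal_density 0 \<sigma>)"
proof -
  have "density lborel (normal_density 0 \<sigma>) = density (distr lborel borel uminus) (normal_density 0 \<sigma>)"
    by (simp add: lborel_distr_uminus)
  also have "\<dots> = distr (density lborel (\<lambda>x. normal_density 0 \<sigma> (- x))) borel uminus"
    by (rule density_distr) auto
  also have "(\<lambda>x. normal_density 0 \<sigma> (- x)) = normal_density 0 \<sigma>"
    by (auto simp: normal_density_def fun_eq_iff)
  finally show ?thesis by simp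
qed

lemma gauss_sym:
  assumes "\<sigma> > 0"
  shows "distr (gaussian_vec d \<sigma>) (PiM {..<d} (\<lambda>_. borel)) (\<lambda>y. \<lambda>j\<in>{..<d}. - y j) = gaussian_vec d \<sigma>"
proof -
  let ?G = "density lborel (normal_density 0 \<sigma>)"
  have G: "prob_space ?G" by (rule prob_space_normal_density[OF assms])
  have mG: "uminus \<in> measurable ?G ?G"
  proof -
    have "(uminus :: real \<Rightarrow> real) \<in> measurable borel borel" by measurable
    moreover have "measurable ?G ?G = measurable borel borel"
      by (rule measurable_cong_sets) auto
    ultimately show ?thesis by simp
  qed
  have "distr (gaussian_vec d \<sigma>) (PiM {..<d} (\<lambda>_. borel)) (\<lambda>y. \<lambda>j\<in>{..<d}. - y j)
      = distr (PiM {..<d} (\<lambda>_. ?G)) (PiM {..<d} (\<lambda>_. ?G)) (compose {..<d} uminus)"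
    unfolding gaussian_vec_def
    by (intro distr_cong sets_PiM_cong) (auto simp: compose_def)
  also have "\<dots> = PiM {..<d} (\<lambda>_. distr ?G ?G uminus)"
    by (rule distr_PiM_finite_prob_space') (use G mG in auto)
  also have "distr ?G ?G uminus = ?G"
    using normal_sym[of \<sigma>] by (metis distr_cong sets_density sets_lborel)
  finally show ?thesis unfolding gaussian_vec_def .
qed

theorem proposition3:
  fixes M :: "'a measure"
    and n d dk dv :: nat and \<sigma> :: real
    and WQ WK WV :: "nat \<Rightarrow> nat \<Rightarrow> real"
    and h :: "'a \<Rightarrow> nat \<Rightarrow> nat \<Rightarrow> real"
  assumes "prob_space M"
    and "n \<ge> 1" "d \<ge> 1" "dk \<ge> 1" "dv \<ge> 1" "\<sigma> > 0"
    and indep: "prob_space.indep_vars M (\<lambda>_. PiM {..<d} (\<lambda>_. borel))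
                  (\<lambda>i \<omega>. \<lambda>j\<in>{..<d}. h \<omega> i j) {..<n}"
    and gauss: "\<And>i. i < n \<Longrightarrow>
                  distr M (PiM {..<d} (\<lambda>_. borel)) (\<lambda>\<omega>. \<lambda>j\<in>{..<d}. h \<omega> i j) = gaussian_vec d \<sigma>"
  shows "\<forall>i<n. \<forall>l<dv. prob_space.expectation M (\<lambda>\<omega>. attn n d dk WQ WK WV (h \<omega>) i l) = 0"
proof (intro allI impI)
  fix i l assume i: "i < n" and l: "l < dv"
  interpret prob_space M by fact
  define I where "I = {..<n}"
  define J where "J = {..<d}"
  define B where "B = PiM J (\<lambda>_. (borel :: real measure))"
  define P where "P = PiM I (\<lambda>_. B)"
  define GV where "GV = gaussian_vec d \<sigma>"
  define X where "X = (\<lambda>i \<omega>. \<lambda>j\<in>J. h \<omega> i j)"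
  define H where "H = (\<lambda>\<omega>. \<lambda>i\<in>I. X i \<omega>)"
  define negv where "negv = (\<lambda>z::nat \<Rightarrow> real. \<lambda>j\<in>J. - z j)"
  define g where "g = (\<lambda>y. attn n d dk WQ WK WV y i l)"
  have ind: "indep_vars (\<lambda>_. B) X I"
    using indep unfolding B_def X_def I_def J_def .
  have rv: "\<And>k. k \<in> I \<Longrightarrow> X k \<in> measurable M B"
    using ind unfolding indep_vars_def by auto
  have Hm: "H \<in> measurable M P"
    unfolding H_def P_def by (rule measurable_restrict) (rule rv)
  have I_ne: "I \<noteq> {}" using \<open>n \<ge> 1\<close> unfolding I_def by (auto simp: lessThan_empty_iff)
  have distH: "distr M P H = PiM I (\<lambda>_. GV)"
  proof -
    have "distr M P H = PiM I (\<lambda>k. distr M B (X k))"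
      using indep_vars_iff_distr_eq_PiM'[THEN iffD1, OF I_ne rv ind]
      unfolding P_def H_def .
    also have "\<dots> = PiM I (\<lambda>_. GV)"
      by (intro PiM_cong refl) (simp add: gauss I_def B_def X_def J_def GV_def)
    finally show ?thesis .
  qed
  have negv_B: "negv \<in> measurable B B"
    unfolding negv_def B_def by measurable
  have setsGV: "sets GV = sets B"
    unfolding GV_def gaussian_vec_def B_def J_def by (intro sets_PiM_cong) auto
  have negv_GV: "negv \<in> measurable GV GV"
    using negv_B measurable_cong_sets[OF setsGV setsGV] by simp
  have GVp: "prob_space GV"
    unfolding GV_def gaussian_vec_def
    by (intro prob_space_PiM prob_space_normal_density \<open>\<sigma> > 0\<close>)
  have cm: "compose I negv \<in> measurable P P"
  proof -
    have "(\<lambda>y. \<lambda>k\<in>I. negv (y k)) \<in> measurable P P"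
      unfolding P_def
      apply (rule measurable_restrict)
      apply (rule measurable_compose[where g=negv])
       apply (erule measurable_component_singleton)
      using negv_B by simp
    moreover have "compose I negv = (\<lambda>y. \<lambda>k\<in>I. negv (y k))"
      by (rule ext) (simp add: compose_def)
    ultimately show ?thesis by simp
  qed
  have symP: "distr (PiM I (\<lambda>_. GV)) P (compose I negv) = PiM I (\<lambda>_. GV)"
  proof -
    have "distr (PiM I (\<lambda>_. GV)) P (compose I negv) = distr (PiM I (\<lambda>_. GV)) (PiM I (\<lambda>_. GV)) (compose I negv)"
      unfolding P_def by (intro distr_cong refl sets_PiM_cong) (auto simp: setsGV)
    also have "\<dots> = PiM I (\<lambda>_. distr GV GV negv)"
      by (rule distr_PiM_finite_prob_space') (auto simp: I_def GVp negv_GV)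
    also have "distr GV GV negv = GV"
    proof -
      have "distr GV GV negv = distr GV B negv"
        by (intro distr_cong refl setsGV)
      also have "\<dots> = GV"
        using gauss_sym[OF \<open>\<sigma> > 0\<close>, of d] unfolding GV_def B_def negv_def J_def .
      finally show ?thesis .
    qed
    finally show ?thesis .
  qed
  have gm: "g \<in> borel_measurable P"
    unfolding g_def P_def B_def I_def J_def by (rule attn_meas[OF i])
  have e1: "(\<lambda>\<omega>. attn n d dk WQ WK WV (h \<omega>) i l) = (\<lambda>\<omega>. g (H \<omega>))"
    unfolding g_def H_def X_def I_def J_def
    by (intro ext attn_restrict i)
  have e2: "(\<lambda>\<omega>. g (compose I negv (H \<omega>))) = (\<lambda>\<omega>. - attn n d dk WQ WK WV (h \<omega>) i l)"
  proof
    fix \<omega>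
    have "compose I negv (H \<omega>) = (\<lambda>k\<in>{..<n}. \<lambda>j\<in>{..<d}. (\<lambda>k j. - h \<omega> k j) k j)"
      by (auto simp: compose_def H_def X_def negv_def I_def J_def fun_eq_iff)
    then have "g (compose I negv (H \<omega>)) = attn n d dk WQ WK WV (\<lambda>k j. - h \<omega> k j) i l"
      unfolding g_def using attn_restrict[OF i, symmetric] by simp
    then show "g (compose I negv (H \<omega>)) = - attn n d dk WQ WK WV (h \<omega>) i l"
      by (simp add: attn_neg)
  qed
  have "expectation (\<lambda>\<omega>. attn n d dk WQ WK WV (h \<omega>) i l) = integral\<^sup>L (distr M P H) g"
    unfolding e1 by (rule integral_distr[OF Hm gm, symmetric])
  also have "\<dots> = integral\<^sup>L (distr (distr M P H) P (compose I negv)) g"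
    unfolding distH symP ..
  also have "\<dots> = expectation (\<lambda>\<omega>. g (compose I negv (H \<omega>)))"
    unfolding distr_distr[OF cm Hm] comp_def
    by (rule integral_distr[OF measurable_comp[OF Hm cm] gm, unfolded comp_def])
  also have "\<dots> = - expectation (\<lambda>\<omega>. attn n d dk WQ WK WV (h \<omega>) i l)"
    unfolding e2 by simp
  finally show "expectation (\<lambda>\<omega>. attn n d dk WQ WK WV (h \<omega>) i l) = 0" by simp
qed

end
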